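(* Let $F,G\colon P\to Q$ be two morphisms of $\omega$-polygraphs and $u$ a cell of $P^*$ such that $F^*(u)=G^*(u)$. Then $F(g)=G(g)$ for every generator $g\in\mathrm{supp}(u)$; that is, the restrictions $F/u,G/u\colon\mathrm{supp}(u)\to\mathrm{supp}(F^*(u))$ coincide.
   Context: An $\omega$-precategory is an $\omega$-globular set with identities $1_u$ and compositions $u\ast_iv$ satisfying the axioms of strict $\omega$-categories except the interchange law. An $\omega$-polygraph $P$ consists of sets $P_k$ of $k$-generators with globular sources and targets in the free precategory on lower generators; $P^*$ is the free $\omega$-precategory it generates, generators identified with cells; morphisms $F\colon P\to Q$ are generator-wise maps compatible with sources/targets, inducing $F^*$. The support $\mathrm{supp}(u)\subseteq\bigsqcup_kP_k$ of a cell is defined inductively: $\mathrm{supp}(g)=\{g\}$ for $g\in P_0$; $\mathrm{supp}(g)=\{g\}\cup\mathrm{supp}(s(g))\cup\mathrm{supp}(t(g))$ for a generator $g\in P_{k+1}$; $\mathrm{supp}(1_{u'})=\mathrm{supp}(u')$; $\mathrm{supp}(u_1\ast_iu_2)=\mathrm{supp}(u_1)\cup\mathrm{supp}(u_2)$. $F/u$ denotes the restriction of $F$ to $\mathrm{supp}(u)$, with values in $\mathrm{supp}(F^*(u))$. *)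

theory Defs
  imports Main
begin

text \<open>Cells of the free precategory are well-formed terms modulo the
  congruence generated by the precategory axioms (no interchange law).\<close>

datatype 'g tm = Gen 'g | Id "'g tm" | Comp nat "'g tm" "'g tm"

record 'g pol =
  gens :: "'g set"
  gdim :: "'g \<Rightarrow> nat"
  gsrc :: "'g \<Rightarrow> 'g tm"
  gtgt :: "'g \<Rightarrow> 'g tm"

fun tdim :: "'g pol \<Rightarrow> 'g tm \<Rightarrow> nat" where
  "tdim P (Gen g) = gdim P g"
| "tdim P (Id u) = Suc (tdim P u)"
| "tdim P (Comp i u v) = tdim P u"

fun tsrc :: "'g pol \<Rightarrow> 'g tm \<Rightarrow> 'g tm" where
  "tsrc P (Gen g) = gsrc P g"
| "tsrc P (Id u) = u"
| "tsrc P (Comp i u v) =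
     (if Suc i = tdim P u then tsrc P u else Comp i (tsrc P u) (tsrc P v))"

fun ttgt :: "'g pol \<Rightarrow> 'g tm \<Rightarrow> 'g tm" where
  "ttgt P (Gen g) = gtgt P g"
| "ttgt P (Id u) = u"
| "ttgt P (Comp i u v) =
     (if Suc i = tdim P u then ttgt P v else Comp i (ttgt P u) (ttgt P v))"

definition srci :: "'g pol \<Rightarrow> nat \<Rightarrow> 'g tm \<Rightarrow> 'g tm" where
  "srci P i u = (tsrc P ^^ (tdim P u - i)) u"

definition tgti :: "'g pol \<Rightarrow> nat \<Rightarrow> 'g tm \<Rightarrow> 'g tm" where
  "tgti P i u = (ttgt P ^^ (tdim P u - i)) u"

definition idn :: "nat \<Rightarrow> 'g tm \<Rightarrow> 'g tm" where
  "idn k u = (Id ^^ k) u"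

inductive cell :: "'g pol \<Rightarrow> 'g tm \<Rightarrow> bool" and eqv :: "'g pol \<Rightarrow> 'g tm \<Rightarrow> 'g tm \<Rightarrow> bool"
  for P :: "'g pol" where
  cell_gen: "g \<in> gens P \<Longrightarrow> cell P (Gen g)"
| cell_id: "cell P u \<Longrightarrow> cell P (Id u)"
| cell_comp: "\<lbrakk>cell P u; cell P v; tdim P u = tdim P v; i < tdim P u;
             eqv P (tgti P i u) (srci P i v)\<rbrakk> \<Longrightarrow> cell P (Comp i u v)"
| eqv_refl: "cell P u \<Longrightarrow> eqv P u u"
| eqv_sym: "eqv P u v \<Longrightarrow> eqv P v u"
| eqv_trans: "eqv P u v \<Longrightarrow> eqv P v w \<Longrightarrow> eqv P u w"
| eqv_id: "eqv P u u' \<Longrightarrow> eqv P (Id u) (Id u')"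
| eqv_comp: "\<lbrakk>eqv P u u'; eqv P v v'; cell P (Comp i u v); cell P (Comp i u' v')\<rbrakk>
             \<Longrightarrow> eqv P (Comp i u v) (Comp i u' v')"
| eqv_assoc: "\<lbrakk>cell P (Comp i (Comp i u v) w); cell P (Comp i u (Comp i v w))\<rbrakk>
             \<Longrightarrow> eqv P (Comp i (Comp i u v) w) (Comp i u (Comp i v w))"
| eqv_lunit: "\<lbrakk>cell P u; i < tdim P u;
               cell P (Comp i (idn (tdim P u - i) (srci P i u)) u)\<rbrakk>
             \<Longrightarrow> eqv P (Comp i (idn (tdim P u - i) (srci P i u)) u) u"
| eqv_runit: "\<lbrakk>cell P u; i < tdim P u;
               cell P (Comp i u (idn (tdim P u - i) (tgti P i u)))\<rbrakk>
             \<Longrightarrow> eqv P (Comp i u (idn (tdim P u - i) (tgti P i u))) u"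
| eqv_idcomp: "cell P (Comp i u v) \<Longrightarrow> eqv P (Id (Comp i u v)) (Comp i (Id u) (Id v))"

definition polygraph :: "'g pol \<Rightarrow> bool" where
  "polygraph P \<longleftrightarrow> (\<forall>g\<in>gens P. 0 < gdim P g \<longrightarrow>
      cell P (gsrc P g) \<and> cell P (gtgt P g) \<and>
      Suc (tdim P (gsrc P g)) = gdim P g \<and> Suc (tdim P (gtgt P g)) = gdim P g \<and>
      (1 < gdim P g \<longrightarrow>
         eqv P (tsrc P (gsrc P g)) (tsrc P (gtgt P g)) \<and>
         eqv P (ttgt P (gsrc P g)) (ttgt P (gtgt P g))))"

text \<open>A morphism of polygraphs: dimension-preserving generator-wise map compatible
  with sources and targets (in the free precategory Q^*). F^* is map_tm F.\<close>

definition pol_morphism :: "'g pol \<Rightarrow> 'h pol \<Rightarrow> ('g \<Rightarrow> 'h) \<Rightarrow> bool" where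
  "pol_morphism P Q F \<longleftrightarrow> (\<forall>g\<in>gens P. F g \<in> gens Q \<and> gdim Q (F g) = gdim P g \<and>
      (0 < gdim P g \<longrightarrow>
         eqv Q (gsrc Q (F g)) (map_tm F (gsrc P g)) \<and>
         eqv Q (gtgt Q (F g)) (map_tm F (gtgt P g))))"

inductive in_supp :: "'g pol \<Rightarrow> 'g \<Rightarrow> 'g tm \<Rightarrow> bool" for P :: "'g pol" where
  "in_supp P g (Gen g)"
| "\<lbrakk>0 < gdim P g; in_supp P x (gsrc P g)\<rbrakk> \<Longrightarrow> in_supp P x (Gen g)"
| "\<lbrakk>0 < gdim P g; in_supp P x (gtgt P g)\<rbrakk> \<Longrightarrow> in_supp P x (Gen g)"
| "in_supp P x u \<Longrightarrow> in_supp P x (Id u)"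
| "in_supp P x u \<Longrightarrow> in_supp P x (Comp i u v)"
| "in_supp P x v \<Longrightarrow> in_supp P x (Comp i u v)"

definition supp :: "'g pol \<Rightarrow> 'g tm \<Rightarrow> 'g set" where
  "supp P u = {x. in_supp P x u}"

end

theory Submission
  imports Defs
begin

fun ed :: "'g pol \<Rightarrow> 'g tm \<Rightarrow> nat" where
  "ed P (Gen g) = gdim P g"
| "ed P (Id u) = ed P u"
| "ed P (Comp i u v) = (if ed P u \<le> i \<and> ed P v \<le> i then ed P u else max (ed P u) (ed P v))"

fun ess :: "'g pol \<Rightarrow> 'g tm \<Rightarrow> 'g list" where
  "ess P (Gen g) = [g]"
| "ess P (Id u) = ess P u"
| "ess P (Comp i u v) = (if ed P u \<le> i then (if ed P v \<le> i then ess P u else ess P v)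
      else (if ed P v \<le> i then ess P u else ess P u @ ess P v))"

inductive wd :: "'g pol \<Rightarrow> 'g tm \<Rightarrow> bool" for P where
  "g \<in> gens P \<Longrightarrow> wd P (Gen g)"
| "wd P u \<Longrightarrow> wd P (Id u)"
| "\<lbrakk>wd P u; wd P v; tdim P u = tdim P v; i < tdim P u\<rbrakk> \<Longrightarrow> wd P (Comp i u v)"

lemma cell_wd: "cell P u \<Longrightarrow> wd P u"
  by (induction rule: cell_eqv.inducts(1)[where ?P2.0 = "\<lambda>u v. True"])
     (auto intro: wd.intros)

lemma ed_le_tdim: "wd P t \<Longrightarrow> ed P t \<le> tdim P t"
  by (induction rule: wd.induct) auto

lemma tsrc_wd: "wd P t \<Longrightarrow> polygraph P \<Longrightarrow> 0 < tdim P t \<Longrightarrow>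
   wd P (tsrc P t) \<and> tdim P (tsrc P t) = tdim P t - 1"
proof (induction rule: wd.induct)
  case (1 g)
  then show ?case unfolding polygraph_def using cell_wd by fastforce
next
  case (2 u)
  then show ?case by simp
next
  case (3 u v i)
  then show ?case by (auto intro: wd.intros)
qed

lemma ttgt_wd: "wd P t \<Longrightarrow> polygraph P \<Longrightarrow> 0 < tdim P t \<Longrightarrow>
   wd P (ttgt P t) \<and> tdim P (ttgt P t) = tdim P t - 1"
proof (induction rule: wd.induct)
  case (1 g)
  then show ?case unfolding polygraph_def using cell_wd by fastforce
next
  case (2 u)
  then show ?case by simp
next
  case (3 u v i)
  then show ?case by (auto intro: wd.intros)
qed

lemma tsrc_pow_wd: "polygraph P \<Longrightarrow> \<forall>t. wd P t \<longrightarrow> k \<le> tdim P t \<longrightarrow>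
   wd P ((tsrc P ^^ k) t) \<and> tdim P ((tsrc P ^^ k) t) = tdim P t - k"
proof (induction k)
  case 0
  then show ?case by simp
next
  case (Suc k)
  show ?case
  proof (intro allI impI)
    fix t assume t: "wd P t" "Suc k \<le> tdim P t"
    have "wd P (tsrc P t) \<and> tdim P (tsrc P t) = tdim P t - 1"
      using tsrc_wd[OF t(1) Suc.prems] t(2) by simp
    then show "wd P ((tsrc P ^^ Suc k) t) \<and> tdim P ((tsrc P ^^ Suc k) t) = tdim P t - Suc k"
      using Suc.IH Suc.prems t(2) by (simp only: funpow_Suc_right o_apply) auto
  qed
qed

lemma ttgt_pow_wd: "polygraph P \<Longrightarrow> \<forall>t. wd P t \<longrightarrow> k \<le> tdim P t \<longrightarrow>
   wd P ((ttgt P ^^ k) t) \<and> tdim P ((ttgt P ^^ k) t) = tdim P t - k"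
proof (induction k)
  case 0
  then show ?case by simp
next
  case (Suc k)
  show ?case
  proof (intro allI impI)
    fix t assume t: "wd P t" "Suc k \<le> tdim P t"
    have "wd P (ttgt P t) \<and> tdim P (ttgt P t) = tdim P t - 1"
      using ttgt_wd[OF t(1) Suc.prems] t(2) by simp
    then show "wd P ((ttgt P ^^ Suc k) t) \<and> tdim P ((ttgt P ^^ Suc k) t) = tdim P t - Suc k"
      using Suc.IH Suc.prems t(2) by (simp only: funpow_Suc_right o_apply) auto
  qed
qed

lemma srci_wd: "polygraph P \<Longrightarrow> wd P t \<Longrightarrow> i \<le> tdim P t \<Longrightarrow>
   wd P (srci P i t) \<and> tdim P (srci P i t) = i"
  unfolding srci_def using tsrc_pow_wd[of P "tdim P t - i"] by auto

lemma tgti_wd: "polygraph P \<Longrightarrow> wd P t \<Longrightarrow> i \<le> tdim P t \<Longrightarrow>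
   wd P (tgti P i t) \<and> tdim P (tgti P i t) = i"
  unfolding tgti_def using ttgt_pow_wd[of P "tdim P t - i"] by auto

inductive good :: "'g pol \<Rightarrow> 'g tm \<Rightarrow> bool" for P where
  "g \<in> gens P \<Longrightarrow> good P (Gen g)"
| "good P u \<Longrightarrow> good P (Id u)"
| "\<lbrakk>good P u; good P v; tdim P u = tdim P v; i < tdim P u;
    ed P u \<le> i \<and> ed P v \<le> i \<longrightarrow> ess P u = ess P v \<and> ed P u = ed P v\<rbrakk>
   \<Longrightarrow> good P (Comp i u v)"

lemma good_wd: "good P t \<Longrightarrow> wd P t"
  by (induction rule: good.induct) (auto intro: wd.intros)

lemma X_src: "good P t \<Longrightarrow> polygraph P \<Longrightarrow> ed P t < tdim P t \<Longrightarrow>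
   good P (tsrc P t) \<and> ess P (tsrc P t) = ess P t \<and> ed P (tsrc P t) = ed P t"
proof (induction rule: good.induct)
  case (1 g)
  then show ?case by simp
next
  case (2 u)
  then show ?case by simp
next
  case (3 u v i)
  have p: "0 < tdim P u" "0 < tdim P v" using "3.hyps"(3,4) by auto
  have d1: "tdim P (tsrc P u) = tdim P u - 1" using tsrc_wd[OF good_wd[OF "3.hyps"(1)] "3.prems"(1) p(1)] by simp
  have d2: "tdim P (tsrc P v) = tdim P v - 1" using tsrc_wd[OF good_wd[OF "3.hyps"(2)] "3.prems"(1) p(2)] by simp
  from 3 d1 d2 show ?case by (auto split: if_splits intro!: good.intros)
qed

lemma X_tgt: "good P t \<Longrightarrow> polygraph P \<Longrightarrow> ed P t < tdim P t \<Longrightarrow>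
   good P (ttgt P t) \<and> ess P (ttgt P t) = ess P t \<and> ed P (ttgt P t) = ed P t"
proof (induction rule: good.induct)
  case (1 g)
  then show ?case by simp
next
  case (2 u)
  then show ?case by simp
next
  case (3 u v i)
  have p: "0 < tdim P u" "0 < tdim P v" using "3.hyps"(3,4) by auto
  have d1: "tdim P (ttgt P u) = tdim P u - 1" using ttgt_wd[OF good_wd[OF "3.hyps"(1)] "3.prems"(1) p(1)] by simp
  have d2: "tdim P (ttgt P v) = tdim P v - 1" using ttgt_wd[OF good_wd[OF "3.hyps"(2)] "3.prems"(1) p(2)] by simp
  from 3 d1 d2 show ?case by (auto split: if_splits intro!: good.intros)
qed

lemma X_src_pow: "polygraph P \<Longrightarrow> \<forall>t. good P t \<longrightarrow> ed P t + k \<le> tdim P t \<longrightarrow>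
   good P ((tsrc P ^^ k) t) \<and> ess P ((tsrc P ^^ k) t) = ess P t \<and> ed P ((tsrc P ^^ k) t) = ed P t"
proof (induction k)
  case 0
  then show ?case by simp
next
  case (Suc k)
  show ?case
  proof (intro allI impI)
    fix t assume t: "good P t" "ed P t + Suc k \<le> tdim P t"
    have a: "good P (tsrc P t) \<and> ess P (tsrc P t) = ess P t \<and> ed P (tsrc P t) = ed P t"
      using X_src[OF t(1) Suc.prems] t(2) by simp
    have b: "tdim P (tsrc P t) = tdim P t - 1"
      using tsrc_wd[OF good_wd[OF t(1)] Suc.prems] t(2) by simp
    have "good P ((tsrc P ^^ k) (tsrc P t)) \<and> ess P ((tsrc P ^^ k) (tsrc P t)) = ess P (tsrc P t)
       \<and> ed P ((tsrc P ^^ k) (tsrc P t)) = ed P (tsrc P t)"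
      using Suc.IH Suc.prems a b t(2) by auto
    then show "good P ((tsrc P ^^ Suc k) t) \<and> ess P ((tsrc P ^^ Suc k) t) = ess P t
       \<and> ed P ((tsrc P ^^ Suc k) t) = ed P t"
      using a by (simp only: funpow_Suc_right o_apply)
  qed
qed

lemma X_tgt_pow: "polygraph P \<Longrightarrow> \<forall>t. good P t \<longrightarrow> ed P t + k \<le> tdim P t \<longrightarrow>
   good P ((ttgt P ^^ k) t) \<and> ess P ((ttgt P ^^ k) t) = ess P t \<and> ed P ((ttgt P ^^ k) t) = ed P t"
proof (induction k)
  case 0
  then show ?case by simp
next
  case (Suc k)
  show ?case
  proof (intro allI impI)
    fix t assume t: "good P t" "ed P t + Suc k \<le> tdim P t"
    have a: "good P (ttgt P t) \<and> ess P (ttgt P t) = ess P t \<and> ed P (ttgt P t) = ed P t"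
      using X_tgt[OF t(1) Suc.prems] t(2) by simp
    have b: "tdim P (ttgt P t) = tdim P t - 1"
      using ttgt_wd[OF good_wd[OF t(1)] Suc.prems] t(2) by simp
    have "good P ((ttgt P ^^ k) (ttgt P t)) \<and> ess P ((ttgt P ^^ k) (ttgt P t)) = ess P (ttgt P t)
       \<and> ed P ((ttgt P ^^ k) (ttgt P t)) = ed P (ttgt P t)"
      using Suc.IH Suc.prems a b t(2) by auto
    then show "good P ((ttgt P ^^ Suc k) t) \<and> ess P ((ttgt P ^^ Suc k) t) = ess P t
       \<and> ed P ((ttgt P ^^ Suc k) t) = ed P t"
      using a by (simp only: funpow_Suc_right o_apply)
  qed
qed

lemma X_srci: "polygraph P \<Longrightarrow> good P t \<Longrightarrow> ed P t \<le> i \<Longrightarrow> i \<le> tdim P t \<Longrightarrow>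
   ess P (srci P i t) = ess P t \<and> ed P (srci P i t) = ed P t"
  unfolding srci_def using X_src_pow[of P "tdim P t - i"] by auto

lemma X_tgti: "polygraph P \<Longrightarrow> good P t \<Longrightarrow> ed P t \<le> i \<Longrightarrow> i \<le> tdim P t \<Longrightarrow>
   ess P (tgti P i t) = ess P t \<and> ed P (tgti P i t) = ed P t"
  unfolding tgti_def using X_tgt_pow[of P "tdim P t - i"] by auto

lemma idn_ess: "ess P (idn k s) = ess P s \<and> ed P (idn k s) = ed P s"
  unfolding idn_def by (induction k) auto

lemma idn_Suc: "idn (Suc k) s = Id (idn k s)"
  unfolding idn_def by simp

lemma inv_main:
  assumes pg: "polygraph P"
  shows "cell P u \<Longrightarrow> good P u"
    and "eqv P u v \<Longrightarrow> ess P u = ess P v \<and> ed P u = ed P v"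
proof (induction rule: cell_eqv.inducts)
  case (cell_gen g)
  then show ?case by (auto intro: good.intros)
next
  case (cell_id u)
  then show ?case by (auto intro: good.intros)
next
  case (cell_comp u v i)
  have "ed P u \<le> i \<and> ed P v \<le> i \<longrightarrow> ess P u = ess P v \<and> ed P u = ed P v"
  proof
    assume h: "ed P u \<le> i \<and> ed P v \<le> i"
    have "ess P (tgti P i u) = ess P u \<and> ed P (tgti P i u) = ed P u"
      using X_tgti[OF pg cell_comp(2)] h cell_comp(5,6) by auto
    moreover have "ess P (srci P i v) = ess P v \<and> ed P (srci P i v) = ed P v"
      using X_srci[OF pg cell_comp(4)] h cell_comp(5,6) by auto
    ultimately show "ess P u = ess P v \<and> ed P u = ed P v" using cell_comp(8) by auto
  qed
  then show ?case using cell_comp by (auto intro: good.intros)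
next
  case (eqv_refl u)
  then show ?case by simp
next
  case (eqv_sym u v)
  then show ?case by simp
next
  case (eqv_trans u v w)
  then show ?case by simp
next
  case (eqv_id u u')
  then show ?case by simp
next
  case (eqv_comp u u' v v' i)
  then show ?case by simp
next
  case (eqv_assoc i u v w)
  then show ?case by (auto simp: max_def)
next
  case (eqv_lunit u i)
  define s where "s = srci P i u"
  define k where "k = tdim P u - i"
  have k: "k = Suc (k - 1)" using eqv_lunit(3) k_def by simp
  have ws: "wd P s \<and> tdim P s = i" unfolding s_def
    using srci_wd[OF pg good_wd[OF eqv_lunit(2)]] eqv_lunit(3) by auto
  have eds: "ed P s \<le> i" using ed_le_tdim ws by fastforce
  have ie: "ess P (idn k s) = ess P s \<and> ed P (idn k s) = ed P s" by (rule idn_ess)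
  show ?case
  proof (cases "ed P u \<le> i")
    case True
    have "ess P s = ess P u \<and> ed P s = ed P u" unfolding s_def
      using X_srci[OF pg eqv_lunit(2) True] eqv_lunit(3) by auto
    then show ?thesis using True ie eds unfolding s_def[symmetric] k_def[symmetric] by simp
  next
    case False
    then show ?thesis using ie eds unfolding s_def[symmetric] k_def[symmetric] by simp
  qed
next
  case (eqv_runit u i)
  define s where "s = tgti P i u"
  define k where "k = tdim P u - i"
  have ws: "wd P s \<and> tdim P s = i" unfolding s_def
    using tgti_wd[OF pg good_wd[OF eqv_runit(2)]] eqv_runit(3) by auto
  have eds: "ed P s \<le> i" using ed_le_tdim ws by fastforce
  have ie: "ess P (idn k s) = ess P s \<and> ed P (idn k s) = ed P s" by (rule idn_ess)
  show ?case using ie eds unfolding s_def[symmetric] k_def[symmetric] by simp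
next
  case (eqv_idcomp i u v)
  then show ?case by simp
qed

lemma in_supp_Gen: "in_supp P y (Gen g) \<longleftrightarrow> y = g \<or> (0 < gdim P g \<and> (in_supp P y (gsrc P g) \<or> in_supp P y (gtgt P g)))"
  by (auto elim: in_supp.cases intro: in_supp.intros)

lemma in_supp_Id[simp]: "in_supp P y (Id u) \<longleftrightarrow> in_supp P y u"
  by (auto elim: in_supp.cases intro: in_supp.intros)

lemma in_supp_Comp[simp]: "in_supp P y (Comp i u v) \<longleftrightarrow> in_supp P y u \<or> in_supp P y v"
  by (auto elim: in_supp.cases intro: in_supp.intros)

lemma in_supp_trans: "in_supp P x t \<Longrightarrow> in_supp P y (Gen x) \<Longrightarrow> in_supp P y t"
  by (induction rule: in_supp.induct) (auto intro: in_supp.intros)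

lemma tsrc_supp: "wd P t \<Longrightarrow> polygraph P \<Longrightarrow> 0 < tdim P t \<Longrightarrow> in_supp P y (tsrc P t) \<Longrightarrow> in_supp P y t"
  by (induction rule: wd.induct) (auto simp: in_supp_Gen split: if_splits)

lemma ttgt_supp: "wd P t \<Longrightarrow> polygraph P \<Longrightarrow> 0 < tdim P t \<Longrightarrow> in_supp P y (ttgt P t) \<Longrightarrow> in_supp P y t"
  by (induction rule: wd.induct) (auto simp: in_supp_Gen split: if_splits)

lemma tsrc_pow_supp: "polygraph P \<Longrightarrow> \<forall>t. wd P t \<longrightarrow> k \<le> tdim P t \<longrightarrow> in_supp P y ((tsrc P ^^ k) t) \<longrightarrow> in_supp P y t"
proof (induction k)
  case 0
  then show ?case by simp
next
  case (Suc k)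
  show ?case
  proof (intro allI impI)
    fix t assume t: "wd P t" "Suc k \<le> tdim P t" "in_supp P y ((tsrc P ^^ Suc k) t)"
    have b: "wd P (tsrc P t) \<and> tdim P (tsrc P t) = tdim P t - 1"
      using tsrc_wd[OF t(1) Suc.prems] t(2) by simp
    have "in_supp P y ((tsrc P ^^ k) (tsrc P t))" using t(3) by (simp only: funpow_Suc_right o_apply)
    then have "in_supp P y (tsrc P t)" using Suc.IH Suc.prems b t(2) by auto
    then show "in_supp P y t" using tsrc_supp[OF t(1) Suc.prems] t(2) by simp
  qed
qed

lemma ttgt_pow_supp: "polygraph P \<Longrightarrow> \<forall>t. wd P t \<longrightarrow> k \<le> tdim P t \<longrightarrow> in_supp P y ((ttgt P ^^ k) t) \<longrightarrow> in_supp P y t"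
proof (induction k)
  case 0
  then show ?case by simp
next
  case (Suc k)
  show ?case
  proof (intro allI impI)
    fix t assume t: "wd P t" "Suc k \<le> tdim P t" "in_supp P y ((ttgt P ^^ Suc k) t)"
    have b: "wd P (ttgt P t) \<and> tdim P (ttgt P t) = tdim P t - 1"
      using ttgt_wd[OF t(1) Suc.prems] t(2) by simp
    have "in_supp P y ((ttgt P ^^ k) (ttgt P t))" using t(3) by (simp only: funpow_Suc_right o_apply)
    then have "in_supp P y (ttgt P t)" using Suc.IH Suc.prems b t(2) by auto
    then show "in_supp P y t" using ttgt_supp[OF t(1) Suc.prems] t(2) by simp
  qed
qed

lemma srci_supp: "polygraph P \<Longrightarrow> wd P t \<Longrightarrow> in_supp P y (srci P i t) \<Longrightarrow> in_supp P y t"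
  unfolding srci_def using tsrc_pow_supp[of P "tdim P t - i"] by auto

lemma tgti_supp: "polygraph P \<Longrightarrow> wd P t \<Longrightarrow> in_supp P y (tgti P i t) \<Longrightarrow> in_supp P y t"
  unfolding tgti_def using ttgt_pow_supp[of P "tdim P t - i"] by auto

lemma ess_supp: "z \<in> set (ess P t) \<Longrightarrow> in_supp P z t"
  by (induction t) (auto split: if_splits intro: in_supp.intros)

lemma ess_gdim: "z \<in> set (ess P t) \<Longrightarrow> gdim P z \<le> ed P t"
  by (induction t) (auto split: if_splits)

lemma ess_gens: "wd P t \<Longrightarrow> set (ess P t) \<subseteq> gens P"
  by (induction rule: wd.induct) auto

lemma supp_ess:
  assumes pg: "polygraph P"
  shows "cell P u \<Longrightarrow> \<forall>y. in_supp P y u \<longrightarrow> (\<exists>z\<in>set (ess P u). in_supp P y (Gen z))"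
    and "eqv P u v \<Longrightarrow> True"
proof (induction rule: cell_eqv.inducts)
  case (cell_gen g)
  then show ?case by (auto intro: in_supp.intros)
next
  case (cell_id u)
  then show ?case by simp
next
  case (cell_comp u v i)
  have wu: "wd P u" and wv: "wd P v" using cell_comp(1,3) cell_wd by auto
  have E: "ess P (tgti P i u) = ess P (srci P i v)"
    using inv_main(2)[OF pg cell_comp(7)] by simp
  show ?case
  proof (intro allI impI)
    fix y assume "in_supp P y (Comp i u v)"
    then consider "in_supp P y u" | "in_supp P y v" by auto
    then show "\<exists>z\<in>set (ess P (Comp i u v)). in_supp P y (Gen z)"
    proof cases
      case 1
      then obtain z where z: "z \<in> set (ess P u)" "in_supp P y (Gen z)" using cell_comp(2) by auto
      show ?thesis
      proof (cases "ed P u \<le> i")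
        case False
        then show ?thesis using z by auto
      next
        case True
        show ?thesis
        proof (cases "ed P v \<le> i")
          case True
          then show ?thesis using z \<open>ed P u \<le> i\<close> by auto
        next
          case False
          have "ess P (tgti P i u) = ess P u"
            using X_tgti[OF pg inv_main(1)[OF pg cell_comp(1)] \<open>ed P u \<le> i\<close>] cell_comp(5,6) by auto
          then have "z \<in> set (ess P (srci P i v))" using z E by simp
          then have "in_supp P z v" by (rule srci_supp[OF pg wv ess_supp])
          then have "in_supp P y v" by (rule in_supp_trans[OF _ z(2)])
          then obtain z' where "z' \<in> set (ess P v)" "in_supp P y (Gen z')" using cell_comp(4) by auto
          then show ?thesis using False \<open>ed P u \<le> i\<close> by auto
        qed
      qed
    next
      case 2
      then obtain z where z: "z \<in> set (ess P v)" "in_supp P y (Gen z)" using cell_comp(4) by auto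
      show ?thesis
      proof (cases "ed P v \<le> i")
        case False
        then show ?thesis using z by auto
      next
        case True
        have ev: "ess P (srci P i v) = ess P v"
          using X_srci[OF pg inv_main(1)[OF pg cell_comp(3)] \<open>ed P v \<le> i\<close>] cell_comp(5,6) by auto
        show ?thesis
        proof (cases "ed P u \<le> i")
          case True
          have "ess P (tgti P i u) = ess P u"
            using X_tgti[OF pg inv_main(1)[OF pg cell_comp(1)] \<open>ed P u \<le> i\<close>] cell_comp(5,6) by auto
          then show ?thesis using z True ev E by auto
        next
          case False
          have "z \<in> set (ess P (tgti P i u))" using z E ev by simp
          then have "in_supp P z u" by (rule tgti_supp[OF pg wu ess_supp])
          then have "in_supp P y u" by (rule in_supp_trans[OF _ z(2)])
          then obtain z' where "z' \<in> set (ess P u)" "in_supp P y (Gen z')" using cell_comp(2) by auto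
          then show ?thesis using False \<open>ed P v \<le> i\<close> by auto
        qed
      qed
    qed
  qed
qed simp_all

lemma ess_map: "wd P t \<Longrightarrow> pol_morphism P Q F \<Longrightarrow>
   ess Q (map_tm F t) = map F (ess P t) \<and> ed Q (map_tm F t) = ed P t"
  by (induction rule: wd.induct) (auto simp: pol_morphism_def)

lemma gen_agree:
  assumes pP: "polygraph P" and pQ: "polygraph Q"
    and mF: "pol_morphism P Q F" and mG: "pol_morphism P Q G"
  shows "\<forall>x. gdim P x = n \<longrightarrow> x \<in> gens P \<longrightarrow> F x = G x \<longrightarrow> (\<forall>y. in_supp P y (Gen x) \<longrightarrow> F y = G y)"
proof (induction n rule: less_induct)
  case (less n)
  have side: "F y = G y" if x: "x \<in> gens P" "gdim P x = n" "0 < gdim P x"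
     and s: "cell P s" "Suc (tdim P s) = gdim P x"
     and eF: "eqv Q a (map_tm F s)" and eG: "eqv Q b (map_tm G s)" and ab: "a = b"
     and y: "in_supp P y s" for x s y a b
  proof -
    have "eqv Q (map_tm F s) (map_tm G s)"
      using eF eG ab by (metis eqv_sym eqv_trans)
    then have "ess Q (map_tm F s) = ess Q (map_tm G s)" using inv_main(2)[OF pQ] by blast
    moreover have ws: "wd P s" using cell_wd s(1) .
    ultimately have me: "map F (ess P s) = map G (ess P s)" using ess_map[OF ws mF] ess_map[OF ws mG] by simp
    obtain z where z: "z \<in> set (ess P s)" "in_supp P y (Gen z)"
      using supp_ess(1)[OF pP s(1)] y by blast
    have "F z = G z" using me z(1) by (simp add: map_eq_conv)
    moreover have lt: "gdim P z < n" using ess_gdim[OF z(1)] ed_le_tdim[OF ws] s(2) x(2) by simp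
    moreover have "z \<in> gens P" using ess_gens[OF ws] z(1) by auto
    ultimately show ?thesis using less.IH[OF lt] z(2) by simp
  qed
  show ?case
  proof (intro allI impI)
    fix x y assume x: "gdim P x = n" "x \<in> gens P" "F x = G x" and y: "in_supp P y (Gen x)"
    show "F y = G y"
    proof (cases "y = x")
      case True then show ?thesis using x by simp
    next
      case False
      then have pos: "0 < gdim P x" and yy: "in_supp P y (gsrc P x) \<or> in_supp P y (gtgt P x)"
        using y False unfolding in_supp_Gen by auto
      have pg: "cell P (gsrc P x)" "cell P (gtgt P x)" "Suc (tdim P (gsrc P x)) = gdim P x"
          "Suc (tdim P (gtgt P x)) = gdim P x"
        using pP x(2) pos unfolding polygraph_def by blast+
      have mf: "eqv Q (gsrc Q (F x)) (map_tm F (gsrc P x))" "eqv Q (gtgt Q (F x)) (map_tm F (gtgt P x))"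
        using mF x(2) pos unfolding pol_morphism_def by blast+
      have mg: "eqv Q (gsrc Q (G x)) (map_tm G (gsrc P x))" "eqv Q (gtgt Q (G x)) (map_tm G (gtgt P x))"
        using mG x(2) pos unfolding pol_morphism_def by blast+
      from yy show ?thesis
      proof
        assume "in_supp P y (gsrc P x)"
        then show ?thesis using side[OF x(2,1) pos pg(1,3) mf(1) mg(1)] x(3) by simp
      next
        assume "in_supp P y (gtgt P x)"
        then show ?thesis using side[OF x(2,1) pos pg(2,4) mf(2) mg(2)] x(3) by simp
      qed
    qed
  qed
qed

theorem lemma4p4:
  fixes P :: "'g pol" and Q :: "'h pol" and F G :: "'g \<Rightarrow> 'h" and u :: "'g tm"
  assumes "polygraph P" and "polygraph Q"
    and "pol_morphism P Q F" and "pol_morphism P Q G"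
    and "cell P u"
    and "eqv Q (map_tm F u) (map_tm G u)"
  shows "\<forall>g\<in>supp P u. F g = G g"
proof
  fix y assume "y \<in> supp P u"
  then have y: "in_supp P y u" unfolding supp_def by simp
  have ws: "wd P u" using cell_wd assms(5) .
  have "ess Q (map_tm F u) = ess Q (map_tm G u)" using inv_main(2)[OF assms(2) assms(6)] by blast
  then have me: "map F (ess P u) = map G (ess P u)"
    using ess_map[OF ws assms(3)] ess_map[OF ws assms(4)] by simp
  obtain z where z: "z \<in> set (ess P u)" "in_supp P y (Gen z)"
    using supp_ess(1)[OF assms(1) assms(5)] y by blast
  have "F z = G z" using me z(1) by (simp add: map_eq_conv)
  moreover have "z \<in> gens P" using ess_gens[OF ws] z(1) by auto
  ultimately show "F y = G y"
    using gen_agree[OF assms(1-4), of "gdim P z"] z(2) by blast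
qed

end
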